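(* Let $X$ be a Tychonoff topological space which is hereditarily Lindelöf and is an $F_{\sigma\delta}$ space. Then $X$ is absolutely $F_{\sigma\delta}$.
   Context: A compactification of a Tychonoff space $X$ is a pair $(cX,\varphi)$ where $cX$ is a compact (Hausdorff) space and $\varphi$ is a homeomorphic embedding of $X$ onto a dense subspace of $cX$; we identify $X$ with $\varphi(X)$. $X$ is called an $F_{\sigma\delta}$ space if there exists a compactification $cX$ of $X$ such that $X$ is an $F_{\sigma\delta}$ subset of $cX$ (a countable intersection of countable unions of closed subsets of $cX$). $X$ is called absolutely $F_{\sigma\delta}$ if $X$ is an $F_{\sigma\delta}$ subset of $cX$ for every compactification $cX$ of $X$. *)

theory Defs
  imports "HOL-Analysis.Analysis"
begin

definition Tychonoff_space :: "'a topology \<Rightarrow> bool" where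
  "Tychonoff_space X \<equiv> completely_regular_space X \<and> Hausdorff_space X"

definition hereditarily_Lindelof_space :: "'a topology \<Rightarrow> bool" where
  "hereditarily_Lindelof_space X \<equiv>
     (\<forall>S. S \<subseteq> topspace X \<longrightarrow> Lindelof_space (subtopology X S))"

definition fsigmadelta_in :: "'a topology \<Rightarrow> 'a set \<Rightarrow> bool" where
  "fsigmadelta_in X \<equiv> (countable intersection_of fsigma_in X) relative_to topspace X"

definition compactification :: "'a topology \<Rightarrow> 'b topology \<Rightarrow> ('a \<Rightarrow> 'b) \<Rightarrow> bool" where
  "compactification X cX \<phi> \<equiv>
     compact_space cX \<and> Hausdorff_space cX \<and> embedding_map X cX \<phi> \<and>
     cX closure_of (\<phi> ` topspace X) = topspace cX"

end

theory Submission imports Defs begin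

lemma emb_cont:
  assumes "embedding_map X K f" shows "continuous_map X K f"
  using assms unfolding embedding_map_def
  using continuous_map_in_subtopology homeomorphic_imp_continuous_map by metis

lemma emb_closure:
  assumes "embedding_map X K f" "D \<subseteq> topspace X" "p \<in> topspace X"
    "f p \<in> K closure_of (f ` D)"
  shows "p \<in> X closure_of D"
proof -
  let ?T = "f ` topspace X"
  have hm: "homeomorphic_map X (subtopology K ?T) f" using assms(1) by (simp add: embedding_map_def)
  have "f ` D \<subseteq> ?T" using assms(2) by auto
  then have "(subtopology K ?T) closure_of (f ` D) = ?T \<inter> K closure_of (f ` D)"
    by (simp add: closure_of_subtopology Int_absorb1)
  also have "(subtopology K ?T) closure_of (f ` D) = f ` (X closure_of D)"
    using homeomorphic_map_closure_of[OF hm assms(2)] .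
  finally have "f p \<in> f ` (X closure_of D)" using assms(3,4) by blast
  then obtain d where d: "d \<in> X closure_of D" "f p = f d" by auto
  have "inj_on f (topspace X)" using hm homeomorphic_imp_injective_map by blast
  moreover have "d \<in> topspace X" using closure_of_subset_topspace[of X D] d(1) by blast
  ultimately show ?thesis using d assms(3) by (metis inj_on_def)
qed

lemma fsd_seq:
  assumes "fsigmadelta_in K S"
  shows "\<exists>F::nat\<Rightarrow>nat\<Rightarrow>_. (\<forall>n m. closedin K (F n m)) \<and> S = topspace K \<inter> (\<Inter>n. \<Union>m. F n m)"
proof -
  obtain U where U: "(countable intersection_of fsigma_in K) U" "topspace K \<inter> U = S"
    using assms unfolding fsigmadelta_in_def relative_to_def by blast
  then obtain \<T> where T: "countable \<T>" "\<T> \<subseteq> Collect (fsigma_in K)" "\<Inter>\<T> = U"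
    unfolding intersection_of_def by blast
  define \<T>' where "\<T>' = insert (topspace K) \<T>"
  have "countable \<T>'" "\<T>' \<noteq> {}" using T by (auto simp: \<T>'_def)
  then have rng: "range (from_nat_into \<T>') = \<T>'" by (simp add: range_from_nat_into)
  have fs: "fsigma_in K (from_nat_into \<T>' n)" for n
      proof -
    have "from_nat_into \<T>' n \<in> \<T>'" using from_nat_into[OF \<open>\<T>' \<noteq> {}\<close>] .
    then have "from_nat_into \<T>' n = topspace K \<or> from_nat_into \<T>' n \<in> \<T>'" by blast
    then have "from_nat_into \<T>' n = topspace K \<or> from_nat_into \<T>' n \<in> \<T>" unfolding \<T>'_def by blast
    then show ?thesis
    proof
      assume "from_nat_into \<T>' n = topspace K" then show ?thesis by simp
    next
      assume "from_nat_into \<T>' n \<in> \<T>" then show ?thesis using T(2) by blast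
    qed
  qed
  have ex: "\<forall>n::nat. \<exists>G::nat\<Rightarrow>_. (\<forall>m. closedin K (G m)) \<and> (\<Union>m. G m) = from_nat_into \<T>' n"
  proof fix n show "\<exists>G::nat\<Rightarrow>_. (\<forall>m. closedin K (G m)) \<and> (\<Union>m. G m) = from_nat_into \<T>' n"
  proof -
    have "\<exists>C. (\<forall>k. closedin K (C k)) \<and> (\<forall>k. C k \<subseteq> C(Suc k)) \<and> \<Union> (range C) = from_nat_into \<T>' n"
      using fs[of n] by (simp only: fsigma_in_ascending)
    then obtain C where C: "(\<forall>k. closedin K (C k)) \<and> (\<forall>k. C k \<subseteq> C(Suc k)) \<and> \<Union> (range C) = from_nat_into \<T>' n" ..
    show ?thesis using C by (intro exI[where x=C]) simp
  qed
  qed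
  from choice[OF ex] obtain F :: "nat \<Rightarrow> nat \<Rightarrow> _" where F: "\<forall>n. (\<forall>m. closedin K (F n m)) \<and> (\<Union>m. F n m) = from_nat_into \<T>' n"
    ..
  have e1: "(\<Union>m. F n m) = from_nat_into \<T>' n" for n using F by blast
  have e2: "(\<Inter>n. \<Union>m. F n m) = \<Inter>\<T>'"
    unfolding e1 rng ..
  have e3: "topspace K \<inter> \<Inter>\<T>' = S" using U(2) T(3) unfolding \<T>'_def by auto
  show ?thesis
  proof (intro exI[where x=F] conjI)
    show "\<forall>n m. closedin K (F n m)" using F by blast
    show "S = topspace K \<inter> (\<Inter>n. \<Union>m. F n m)" using e2 e3 by simp
  qed
qed


lemma sep:
  assumes HL: "hereditarily_Lindelof_space X" and reg: "regular_space L"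
    and g: "continuous_map X L g"
    and U: "openin X U" and Ob: "openin L Ob" and gU: "g ` U \<subseteq> Ob"
  shows "\<exists>S. fsigma_in L S \<and> g ` U \<subseteq> S \<and> S \<subseteq> Ob"
proof -
  have Usub: "U \<subseteq> topspace X" using U openin_subset by blast
  have "\<exists>W. openin L W \<and> g x \<in> W \<and> L closure_of W \<subseteq> Ob" if "x \<in> U" for x
  proof -
    have gx2: "g x \<in> Ob" using gU that by blast
    have gx: "g x \<in> topspace L" "g x \<in> Ob" using gx2 openin_subset[OF Ob] by blast+
    have "closedin L (topspace L - Ob)" by (rule closedin_diff[OF closedin_topspace Ob])
    then obtain W where W: "openin L W" "g x \<in> W" "disjnt (topspace L - Ob) (L closure_of W)"
      using reg gx unfolding regular_space by (metis Diff_iff)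
    have "L closure_of W \<subseteq> Ob"
      using W(3) closure_of_subset_topspace[of L W] unfolding disjnt_def by blast
    then show ?thesis using W by blast
  qed
  then have "\<forall>x\<in>U. \<exists>W. openin L W \<and> g x \<in> W \<and> L closure_of W \<subseteq> Ob" by blast
  from bchoice[OF this] obtain W where W0: "\<forall>x\<in>U. openin L (W x) \<and> g x \<in> W x \<and> L closure_of (W x) \<subseteq> Ob" ..
  then have W: "\<And>x. x \<in> U \<Longrightarrow> openin L (W x) \<and> g x \<in> W x \<and> L closure_of (W x) \<subseteq> Ob" by blast
  define V where "V x = {y \<in> U. g y \<in> W x}" for x
  have Lin: "Lindelof_space (subtopology X U)"
    using HL Usub unfolding hereditarily_Lindelof_space_def by blast
  have opV: "openin (subtopology X U) (V x)" if "x \<in> U" for x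
  proof -
    have "openin X {y \<in> topspace X. g y \<in> W x}"
      using openin_continuous_map_preimage[OF g] W[OF that] by blast
    moreover have "V x = {y \<in> topspace X. g y \<in> W x} \<inter> U" using Usub by (auto simp: V_def)
    ultimately show ?thesis unfolding openin_subtopology by blast
  qed
  have cov: "\<Union>(V ` U) = topspace (subtopology X U)"
  proof
    show "\<Union>(V ` U) \<subseteq> topspace (subtopology X U)" using Usub by (auto simp: V_def)
    show "topspace (subtopology X U) \<subseteq> \<Union>(V ` U)"
    proof
      fix y assume "y \<in> topspace (subtopology X U)"
      then have "y \<in> U" by simp
      then have "y \<in> V y" using W[of y] by (simp add: V_def)
      then show "y \<in> \<Union>(V ` U)" using \<open>y \<in> U\<close> by blast
    qed
  qed
  obtain \<V> where \<V>: "countable \<V>" "\<V> \<subseteq> V ` U" "\<Union>\<V> = topspace (subtopology X U)"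
  proof -
    have H: "(\<forall>Y\<in>V ` U. openin (subtopology X U) Y) \<and> \<Union>(V ` U) = topspace (subtopology X U)"
      using opV cov by (intro conjI ballI) auto
    have "\<exists>\<V>. countable \<V> \<and> \<V> \<subseteq> V ` U \<and> \<Union>\<V> = topspace (subtopology X U)"
      using Lin[unfolded Lindelof_space_def, THEN spec[of _ "V ` U"], THEN mp, OF H] .
    then show ?thesis by (elim exE conjE) (rule that)
  qed
  then obtain A where A: "countable A" "A \<subseteq> U" "\<V> = V ` A"
    using countable_subset_image by metis
  define S where "S = (\<Union>x\<in>A. L closure_of (W x))"
  have "fsigma_in L S" unfolding S_def
    by (rule fsigma_in_Union) (use A(1) in \<open>auto intro: closed_imp_fsigma_in\<close>)
  moreover have "g ` U \<subseteq> S"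
  proof
    fix z assume "z \<in> g ` U"
    then obtain y where y: "y \<in> U" "z = g y" by blast
    then have "y \<in> \<Union>\<V>" using \<V>(3) Usub by auto
    then obtain x where x: "x \<in> A" "y \<in> V x" using A(3) by blast
    then have "g y \<in> W x" by (simp add: V_def)
    moreover have "W x \<subseteq> topspace L" using W[of x] x(1) A(2) openin_subset by blast
    ultimately have "g y \<in> L closure_of (W x)" using closure_of_subset by blast
    then show "z \<in> S" using x y by (auto simp: S_def)
  qed
  moreover have "S \<subseteq> Ob" using W A(2) by (auto simp: S_def)
  ultimately show ?thesis by blast
qed


lemma cm_top: "continuous_map X Y f \<Longrightarrow> x \<in> topspace X \<Longrightarrow> f x \<in> topspace Y"
  by (simp add: continuous_map_def Pi_iff)

theorem theorem4p1:
  fixes X :: "'a topology" and cX0 :: "'b topology" and \<phi>0 :: "'a \<Rightarrow> 'b"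
  assumes "Tychonoff_space X"
    and "hereditarily_Lindelof_space X"
    and "compactification X cX0 \<phi>0"
    and "fsigmadelta_in cX0 (\<phi>0 ` topspace X)"
  shows "\<forall>(cX :: 'c topology) \<phi>. compactification X cX \<phi> \<longrightarrow>
           fsigmadelta_in cX (\<phi> ` topspace X)"
proof (intro allI impI)
  fix L :: "'c topology" and \<psi> :: "'a \<Rightarrow> 'c"
  assume compL: "compactification X L \<psi>"
  define K where "K = cX0"
  define \<phi> where "\<phi> = \<phi>0"
  have HL: "hereditarily_Lindelof_space X" by fact
  have Kc: "compact_space K" and embK: "embedding_map X K \<phi>"
    using assms(3) unfolding compactification_def K_def \<phi>_def by blast+
  have Lc: "compact_space L" and LH: "Hausdorff_space L" and embL: "embedding_map X L \<psi>"
    and Ld: "L closure_of (\<psi> ` topspace X) = topspace L"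
    using compL unfolding compactification_def by blast+
  have regL: "regular_space L" using Lc LH compact_Hausdorff_imp_regular_space by blast
  have cK: "continuous_map X K \<phi>" using embK emb_cont by blast
  have cL: "continuous_map X L \<psi>" using embL emb_cont by blast
  obtain F :: "nat \<Rightarrow> nat \<Rightarrow> 'b set" where Fc: "\<And>n m. closedin K (F n m)"
    and FX: "\<phi> ` topspace X = topspace K \<inter> (\<Inter>n. \<Union>m. F n m)"
    using fsd_seq[OF assms(4)] unfolding K_def \<phi>_def by blast
  define C :: "nat list \<Rightarrow> 'a set" where
    "C l = {x \<in> topspace X. \<forall>i<length l. \<phi> x \<in> F i (l!i)}" for l
  have C_nil: "C [] = topspace X" by (simp add: C_def)
  have C_sub: "C l \<subseteq> topspace X" for l by (auto simp: C_def)
  have C_closed: "closedin X (C l)" for l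
  proof -
    define G where "G = \<Inter>(insert (topspace K) ((\<lambda>i. F i (l!i)) ` {..<length l}))"
    have "closedin K G" unfolding G_def by (rule closedin_Inter) (auto simp: Fc)
    moreover have "C l = {x \<in> topspace X. \<phi> x \<in> G}"
      using cm_top[OF cK] by (auto simp: C_def G_def)
    ultimately show ?thesis using closedin_continuous_map_preimage[OF cK] by simp
  qed
  have C_snoc: "C (l @ [m]) = {x \<in> C l. \<phi> x \<in> F (length l) m}" for l m
    by (auto simp: C_def nth_append less_Suc_eq)
  have C_cover: "\<exists>m. x \<in> C (l @ [m])" if "x \<in> C l" for x l
  proof -
    have "\<phi> x \<in> \<phi> ` topspace X" using that C_sub by blast
    then have "\<phi> x \<in> (\<Union>m. F (length l) m)" unfolding FX by blast
    then obtain m where "\<phi> x \<in> F (length l) m" by blast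
    then show ?thesis using that C_snoc by blast
  qed
  have exS: "\<exists>S. fsigma_in L S \<and> \<psi> ` (topspace X - C l) \<subseteq> S \<and> S \<subseteq> topspace L - L closure_of (\<psi> ` C l)" for l
  proof (rule sep[OF HL regL cL])
    show "openin X (topspace X - C l)" using C_closed by blast
    show "openin L (topspace L - L closure_of (\<psi> ` C l))"
      by (rule openin_diff[OF openin_topspace closedin_closure_of])
    show "\<psi> ` (topspace X - C l) \<subseteq> topspace L - L closure_of (\<psi> ` C l)"
    proof
      fix y assume "y \<in> \<psi> ` (topspace X - C l)"
      then obtain x where x: "x \<in> topspace X" "x \<notin> C l" "y = \<psi> x" by blast
      have "\<psi> x \<notin> L closure_of (\<psi> ` C l)"
      proof
        assume "\<psi> x \<in> L closure_of (\<psi> ` C l)"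
        then have "x \<in> X closure_of C l" using emb_closure[OF embL C_sub x(1)] by blast
        then show False using x(2) closure_of_closedin[OF C_closed] by blast
      qed
      then show "y \<in> topspace L - L closure_of (\<psi> ` C l)" using x cm_top[OF cL] by blast
    qed
  qed
  then have "\<forall>l. \<exists>S. fsigma_in L S \<and> \<psi> ` (topspace X - C l) \<subseteq> S \<and> S \<subseteq> topspace L - L closure_of (\<psi> ` C l)"
    by blast
  from choice[OF this] obtain S :: "nat list \<Rightarrow> 'c set" where
    S: "\<forall>l. fsigma_in L (S l) \<and> \<psi> ` (topspace X - C l) \<subseteq> S l \<and> S l \<subseteq> topspace L - L closure_of (\<psi> ` C l)" ..
  define R :: "nat list \<Rightarrow> 'c set" where "R l = S l \<union> (\<Union>m. L closure_of (\<psi> ` C (l @ [m])))" for l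
  have R_fs: "fsigma_in L (R l)" for l
    unfolding R_def
    by (intro fsigma_in_Un fsigma_in_Union) (use S in \<open>auto intro: closed_imp_fsigma_in\<close>)
  have key: "topspace L \<inter> \<Inter>(range R) = \<psi> ` topspace X"
  proof
    show "\<psi> ` topspace X \<subseteq> topspace L \<inter> \<Inter>(range R)"
    proof
      fix y assume "y \<in> \<psi> ` topspace X"
      then obtain x where x: "x \<in> topspace X" "y = \<psi> x" by blast
      have "\<psi> x \<in> R l" for l
      proof (cases "x \<in> C l")
        case True
        then obtain m where m: "x \<in> C (l @ [m])" using C_cover by blast
        have "\<psi> ` C (l @ [m]) \<subseteq> topspace L" using C_sub cm_top[OF cL] by blast
        then have "\<psi> x \<in> L closure_of (\<psi> ` C (l @ [m]))" using m closure_of_subset by blast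
        then show ?thesis unfolding R_def by blast
      next
        case False
        then show ?thesis using S x unfolding R_def by blast
      qed
      then show "y \<in> topspace L \<inter> \<Inter>(range R)" using x cm_top[OF cL] by blast
    qed
  next
    show "topspace L \<inter> \<Inter>(range R) \<subseteq> \<psi> ` topspace X"
    proof
      fix z assume z: "z \<in> topspace L \<inter> \<Inter>(range R)"
      have zL: "z \<in> topspace L" and zR: "\<And>l. z \<in> R l" using z by blast+
      have step: "\<exists>m. z \<in> L closure_of (\<psi> ` C (l @ [m]))" if "z \<in> L closure_of (\<psi> ` C l)" for l
      proof -
        have "z \<notin> S l" using S that by blast
        then show ?thesis using zR[of l] unfolding R_def by blast
      qed
      define nxt where "nxt l = (SOME m. z \<in> L closure_of (\<psi> ` C (l @ [m])))" for l
      define lst :: "nat \<Rightarrow> nat list" where "lst = rec_nat [] (\<lambda>n l. l @ [nxt l])"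
      have lst0: "lst 0 = []" by (simp add: lst_def)
      have lstS: "lst (Suc n) = lst n @ [nxt (lst n)]" for n by (simp add: lst_def)
      have len: "length (lst n) = n" for n by (induct n) (simp_all add: lst0 lstS)
      have inL: "z \<in> L closure_of (\<psi> ` C (lst n))" for n
      proof (induct n)
        case 0
        then show ?case using zL Ld by (simp add: lst0 C_nil)
      next
        case (Suc n)
        then have "\<exists>m. z \<in> L closure_of (\<psi> ` C (lst n @ [m]))" by (rule step)
        then show ?case unfolding lstS nxt_def by (rule someI_ex)
      qed
      have decC: "C (lst k) \<subseteq> C (lst n)" if "n \<le> k" for n k
      proof (rule lift_Suc_antimono_le[of "\<lambda>n. C (lst n)", OF _ that])
        fix n show "C (lst (Suc n)) \<subseteq> C (lst n)" unfolding lstS C_snoc by blast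
      qed
      define Ak where "Ak n V = K closure_of (\<phi> ` {x \<in> C (lst n). \<psi> x \<in> V})" for n V
      define \<A> where "\<A> = {Ak n V | n V. openin L V \<and> z \<in> V}"
      have Ak_ne: "Ak n V \<noteq> {}" if "openin L V" "z \<in> V" for n V
      proof -
        have H: "\<forall>T. z \<in> T \<and> openin L T \<longrightarrow> (\<exists>y. y \<in> \<psi> ` C (lst n) \<and> y \<in> T)"
          using inL[of n] unfolding in_closure_of by (rule conjunct2)
        have "z \<in> V \<and> openin L V" using that by simp
        then have "\<exists>y. y \<in> \<psi> ` C (lst n) \<and> y \<in> V" by (rule mp[OF spec[OF H, of V]])
        then obtain y where y: "y \<in> \<psi> ` C (lst n)" "y \<in> V" by (elim exE conjE)
        then obtain x where x: "x \<in> C (lst n)" "\<psi> x \<in> V" by blast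
        have sub: "\<phi> ` {x \<in> C (lst n). \<psi> x \<in> V} \<subseteq> topspace K"
          using C_sub cm_top[OF cK] by blast
        have "\<phi> x \<in> \<phi> ` {x \<in> C (lst n). \<psi> x \<in> V}" using x by blast
        then have "\<phi> x \<in> Ak n V" unfolding Ak_def using closure_of_subset[OF sub] by blast
        then show ?thesis by blast
      qed
      have Ak_mono: "Ak k (V1 \<inter> V2) \<subseteq> Ak n V1" if "n \<le> k" for n k V1 V2
      proof -
        have "{x \<in> C (lst k). \<psi> x \<in> V1 \<inter> V2} \<subseteq> {x \<in> C (lst n). \<psi> x \<in> V1}"
          using decC[OF that] by blast
        then show ?thesis unfolding Ak_def by (intro closure_of_mono image_mono)
      qed
      have fin: "\<exists>n V. openin L V \<and> z \<in> V \<and> Ak n V \<subseteq> \<Inter>\<F>" if "finite \<F>" "\<F> \<subseteq> \<A>" for \<F>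
        using that
      proof (induct \<F> rule: finite_induct)
        case empty
        show ?case by (rule exI[of _ 0], rule exI[of _ "topspace L"]) (simp add: zL)
      next
        case (insert A \<F>)
        then obtain n1 V1 where nV1: "openin L V1" "z \<in> V1" "Ak n1 V1 \<subseteq> \<Inter>\<F>" by blast
        from insert(4) have "A \<in> \<A>" by blast
        then obtain n2 V2 where nV2: "openin L V2" "z \<in> V2" "A = Ak n2 V2" unfolding \<A>_def by blast
        have "Ak (max n1 n2) (V1 \<inter> V2) \<subseteq> Ak n1 V1" by (rule Ak_mono) simp
        moreover have "Ak (max n1 n2) (V1 \<inter> V2) \<subseteq> Ak n2 V2"
          using Ak_mono[of n2 "max n1 n2" V2 V1] by (simp add: Int_commute)
        ultimately have "Ak (max n1 n2) (V1 \<inter> V2) \<subseteq> \<Inter>(insert A \<F>)" using nV1(3) nV2(3) by blast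
        moreover have "openin L (V1 \<inter> V2)" using nV1 nV2 by blast
        ultimately show ?case using nV1(2) nV2(2) by blast
      qed
      have cf: "\<forall>\<U>. (\<forall>C\<in>\<U>. closedin K C) \<and> (\<forall>\<F>. finite \<F> \<and> \<F> \<subseteq> \<U> \<longrightarrow> \<Inter>\<F> \<noteq> {}) \<longrightarrow> \<Inter>\<U> \<noteq> {}"
        using Kc unfolding compact_space_fip .
      have H: "(\<forall>C\<in>\<A>. closedin K C) \<and> (\<forall>\<F>. finite \<F> \<and> \<F> \<subseteq> \<A> \<longrightarrow> \<Inter>\<F> \<noteq> {})"
      proof (intro conjI ballI allI impI)
        fix A assume "A \<in> \<A>"
        then obtain n V where "A = Ak n V" unfolding \<A>_def by blast
        then show "closedin K A" by (simp add: Ak_def)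
      next
        fix \<F> assume F1: "finite \<F> \<and> \<F> \<subseteq> \<A>"
        have f1: "finite \<F>" and f2: "\<F> \<subseteq> \<A>" using F1 by simp_all
        obtain n V where nV: "openin L V" "z \<in> V" "Ak n V \<subseteq> \<Inter>\<F>"
          using fin[OF f1 f2] by (elim exE conjE)
        have "Ak n V \<noteq> {}" by (rule Ak_ne[OF nV(1,2)])
        then show "\<Inter>\<F> \<noteq> {}" using nV(3) by auto
      qed
      have "\<Inter>\<A> \<noteq> {}" by (rule mp[OF spec[OF cf, of \<A>] H])
      then obtain q where q: "q \<in> \<Inter>\<A>" by blast
      have qA: "q \<in> Ak n V" if "openin L V" "z \<in> V" for n V
        using q that unfolding \<A>_def by blast
      have qtop: "q \<in> Ak n (topspace L)" for n using qA zL by blast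
      have "q \<in> topspace K" using qtop[of 0] closure_of_subset_topspace[of K] unfolding Ak_def by (rule subsetD[rotated])
      moreover have "q \<in> (\<Union>m. F i m)" for i
      proof -
        have "\<phi> ` {x \<in> C (lst (Suc i)). \<psi> x \<in> topspace L} \<subseteq> F i (lst (Suc i) ! i)"
          using len[of "Suc i"] by (auto simp: C_def)
        then have "Ak (Suc i) (topspace L) \<subseteq> F i (lst (Suc i) ! i)"
          unfolding Ak_def by (rule closure_of_minimal) (rule Fc)
        then show ?thesis using qtop[of "Suc i"] by blast
      qed
      ultimately have "q \<in> \<phi> ` topspace X" unfolding FX by blast
      then obtain p where p: "p \<in> topspace X" "q = \<phi> p" by blast
      have "\<psi> p = z"
      proof (rule ccontr)
        assume ne: "\<psi> p \<noteq> z"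
        have "\<psi> p \<in> topspace L" using p cm_top[OF cL] by blast
        then obtain V W where VW: "openin L V" "openin L W" "z \<in> V" "\<psi> p \<in> W" "disjnt V W"
          using LH zL ne unfolding Hausdorff_space_def by metis
        define D where "D = {x \<in> topspace X. \<psi> x \<in> V}"
        have "q \<in> Ak 0 V" using qA VW by blast
        then have "\<phi> p \<in> K closure_of (\<phi> ` D)" unfolding Ak_def D_def lst0 C_nil p(2) .
        then have "p \<in> X closure_of D" using emb_closure[OF embK _ p(1)] by (simp add: D_def)
        then have "\<psi> p \<in> L closure_of (\<psi> ` D)" using continuous_map_image_closure_subset[OF cL] by blast
        moreover have "L closure_of (\<psi> ` D) \<subseteq> L closure_of V" by (rule closure_of_mono) (auto simp: D_def)
        ultimately have "\<psi> p \<in> L closure_of V" by blast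
        then obtain y where "y \<in> V" "y \<in> W" using VW(2,4) unfolding in_closure_of by blast
        then show False using VW(5) unfolding disjnt_def by blast
      qed
      then show "z \<in> \<psi> ` topspace X" using p(1) by blast
    qed
  qed
  show "fsigmadelta_in L (\<psi> ` topspace X)"
    unfolding fsigmadelta_in_def relative_to_def intersection_of_def
  proof (intro exI conjI)
    show "countable (range R)" by simp
    show "range R \<subseteq> Collect (fsigma_in L)" using R_fs by blast
    show "topspace L \<inter> \<Inter>(range R) = \<psi> ` topspace X" by (rule key)
  qed (rule refl)
qed

end
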